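(* Let $\mathcal{X}=\{x_1,\dots,x_n\}$ and $\mathcal{Y}=\{y_1,\dots,y_m\}$ be the entity sets of a source KG and a target KG, with triplet sets $\mathcal{T}^{\mathcal{X}}$ and $\mathcal{T}^{\mathcal{Y}}$ respectively (each already augmented with reverse triplets as described in the context). Let $\mathbf{x}_1,\dots,\mathbf{x}_n,\mathbf{y}_1,\dots,\mathbf{y}_m\in\mathbb{R}^d$ be entity embeddings and suppose that, in each KG separately, every entity $e$ with $\mathcal{T}_e\neq\emptyset$ satisfies the TransE stationarity relation $$\mathbf{e}=\frac{1}{|\mathcal{T}_e|}\sum_{(e,r,o)\in\mathcal{T}_e}\Big(\mathbf{o}-\frac{1}{|\mathcal{T}_r|}\sum_{(s',r,o')\in\mathcal{T}_r}(\mathbf{o}'-\mathbf{s}')\Big),$$ where the triplet sets are taken within that KG. Define $\Lambda=(\lambda_{i,j})\in\mathbb{R}^{n\times n}$ by $$\lambda_{i,j}=\frac{1}{|\mathcal{T}_{x_i}|}\Big(|R(x_i,x_j)|+\sum_{r\in R}\frac{|\mathcal{T}_{x_i,r}|}{|\mathcal{T}_r|}\big(|\mathcal{T}_{x_j,r}|-|\mathcal{T}_{x_j,r^{-1}}|\big)\Big)$$ (computed in the source KG), and $\Lambda'=(\lambda'_{i,j})\in\mathbb{R}^{m\times m}$ analogously in the target KG. Then $\mathbf{x}_i=\sum_{k=1}^n\lambda_{i,k}\mathbf{x}_k$ for all $i$, $\mathbf{y}_j=\sum_{l=1}^m\lambda'_{j,l}\mathbf{y}_l$ for all $j$, and the pairwise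 similarity matrix $\Omega=(\omega_{i,j})\in\mathbb{R}^{n\times m}$, $\omega_{i,j}=\mathbf{x}_i\cdot\mathbf{y}_j$, is a fixpoint of the map $\Omega\mapsto\Lambda\Omega(\Lambda')^\top$, i.e. $\Lambda\Omega(\Lambda')^\top=\Omega$.
   Context: A knowledge graph (KG) is a set of triplets $(s,r,o)$ (subject entity, relation, object entity). For each triplet $(s,r,o)$ a reverse triplet $(o,r^{-1},s)$ is added, with $r^{-1}$ a new relation symbol; $R$ denotes the set of all relations (including reverse ones). Notation: $\mathcal{T}_e$ is the set of triplets with $e$ as subject; $\mathcal{T}_r$ the set of triplets with relation $r$; $\mathcal{T}_{e,r}$ the set of triplets with subject $e$ and relation $r$; $R(x_i,x_j)$ the set of relations $r$ with $(x_i,r,x_j)$ a triplet. All sets of triplets involved are assumed nonempty where they appear in a denominator. The stationarity relation above is the form the entity embeddings take at a stationary point of the TransE-based entity alignment loss (translational loss $\sum\|\mathbf{s}+\mathbf{r}-\mathbf{o}\|_2^2$ plus alignment loss plus unit-norm constraints), after eliminating relation embeddings. *)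

theory Defs
  imports "HOL-Analysis.Analysis"
begin

text \<open>A knowledge graph over entity type 'e and relation type 'r is a set of
triplets (subject, relation, object). The map rinv sends r to its reverse relation.\<close>

definition trip_subj :: "('e \<times> 'r \<times> 'e) set \<Rightarrow> 'e \<Rightarrow> ('e \<times> 'r \<times> 'e) set"
  where "trip_subj T e = {t \<in> T. fst t = e}"

definition trip_rel :: "('e \<times> 'r \<times> 'e) set \<Rightarrow> 'r \<Rightarrow> ('e \<times> 'r \<times> 'e) set"
  where "trip_rel T r = {t \<in> T. fst (snd t) = r}"

definition trip_subj_rel :: "('e \<times> 'r \<times> 'e) set \<Rightarrow> 'e \<Rightarrow> 'r \<Rightarrow> ('e \<times> 'r \<times> 'e) set"
  where "trip_subj_rel T e r = {t \<in> T. fst t = e \<and> fst (snd t) = r}"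

definition rels_between :: "('e \<times> 'r \<times> 'e) set \<Rightarrow> 'e \<Rightarrow> 'e \<Rightarrow> 'r set"
  where "rels_between T a b = {r. (a, r, b) \<in> T}"

definition rels :: "('e \<times> 'r \<times> 'e) set \<Rightarrow> 'r set"
  where "rels T = {r. \<exists>s ob. (s, r, ob) \<in> T}"

definition reverse_closed :: "('e \<times> 'r \<times> 'e) set \<Rightarrow> ('r \<Rightarrow> 'r) \<Rightarrow> bool"
  where "reverse_closed T rinv \<longleftrightarrow>
           (\<forall>r. rinv (rinv r) = r) \<and> (\<forall>s r ob. (s, r, ob) \<in> T \<longrightarrow> (ob, rinv r, s) \<in> T)"

definition transE_stationary :: "('e \<times> 'r \<times> 'e) set \<Rightarrow> ('e \<Rightarrow> real ^ 'd) \<Rightarrow> bool"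
  where "transE_stationary T emb \<longleftrightarrow>
    (\<forall>e. trip_subj T e \<noteq> {} \<longrightarrow>
       emb e = (1 / real (card (trip_subj T e))) *\<^sub>R
         (\<Sum>(s, r, ob) \<in> trip_subj T e.
            emb ob - (1 / real (card (trip_rel T r))) *\<^sub>R
                      (\<Sum>(s', r', o') \<in> trip_rel T r. emb o' - emb s')))"

definition lam :: "('e \<times> 'r \<times> 'e) set \<Rightarrow> ('r \<Rightarrow> 'r) \<Rightarrow> 'e \<Rightarrow> 'e \<Rightarrow> real"
  where "lam T rinv a b = (1 / real (card (trip_subj T a))) *
     (real (card (rels_between T a b)) +
      (\<Sum>r \<in> rels T. real (card (trip_subj_rel T a r)) / real (card (trip_rel T r)) *
           (real (card (trip_subj_rel T b r)) - real (card (trip_subj_rel T b (rinv r))))))"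

definition lam_matrix :: "('e::finite \<times> 'r \<times> 'e) set \<Rightarrow> ('r \<Rightarrow> 'r) \<Rightarrow> real ^ 'e ^ 'e"
  where "lam_matrix T rinv = (\<chi> i j. lam T rinv i j)"

end

theory Submission
  imports Defs
begin

lemma group_sum:
  fixes f :: "'k \<Rightarrow> 'v::real_vector"
  assumes "finite A" "finite S" "g ` A \<subseteq> S"
  shows "(\<Sum>t\<in>A. f (g t)) = (\<Sum>k\<in>S. real (card {t\<in>A. g t = k}) *\<^sub>R f k)"
proof -
  have "(\<Sum>t\<in>A. f (g t)) = (\<Sum>k\<in>S. \<Sum>t\<in>{t\<in>A. g t = k}. f (g t))"
    using sum.group[OF assms, of "\<lambda>t. f (g t)"] by simp
  also have "\<dots> = (\<Sum>k\<in>S. real (card {t\<in>A. g t = k}) *\<^sub>R f k)"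
  proof (rule sum.cong[OF refl])
    fix k assume "k \<in> S"
    have "(\<Sum>t\<in>{t\<in>A. g t = k}. f (g t)) = (\<Sum>t\<in>{t\<in>A. g t = k}. f k)"
      by (rule sum.cong) auto
    thus "(\<Sum>t\<in>{t\<in>A. g t = k}. f (g t)) = real (card {t\<in>A. g t = k}) *\<^sub>R f k"
      by (simp add: sum_constant_scaleR)
  qed
  finally show ?thesis .
qed

lemma stat_lin:
  fixes T :: "('e::finite \<times> 'r \<times> 'e) set" and emb :: "'e \<Rightarrow> real ^ 'd"
  assumes fin: "finite T" and rc: "reverse_closed T rinv"
    and ne: "trip_subj T e \<noteq> {}" and st: "transE_stationary T emb"
  shows "emb e = (\<Sum>k\<in>UNIV. lam T rinv e k *\<^sub>R emb k)"
proof -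
  define Te where "Te = trip_subj T e"
  define V where "V r = (\<Sum>t\<in>trip_rel T r. emb (snd (snd t)) - emb (fst t))" for r
  define c where "c r = 1 / real (card (trip_rel T r))" for r
  have finTe: "finite Te" using fin unfolding Te_def trip_subj_def by simp
  have finR: "finite (rels T)"
  proof -
    have "rels T = (\<lambda>t. fst (snd t)) ` T" unfolding rels_def by force
    thus ?thesis using fin by simp
  qed
  have finTr: "finite (trip_rel T r)" for r using fin unfolding trip_rel_def by simp
  have e1: "emb e = (1 / real (card Te)) *\<^sub>R
      (\<Sum>t\<in>Te. emb (snd (snd t)) - c (fst (snd t)) *\<^sub>R V (fst (snd t)))"
    using st ne unfolding transE_stationary_def Te_def V_def c_def
    by (simp add: case_prod_beta)
  have A: "(\<Sum>t\<in>Te. emb (snd (snd t))) = (\<Sum>k\<in>UNIV. real (card (rels_between T e k)) *\<^sub>R emb k)"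
  proof -
    have "(\<Sum>t\<in>Te. emb (snd (snd t))) = (\<Sum>k\<in>UNIV. real (card {t\<in>Te. snd (snd t) = k}) *\<^sub>R emb k)"
      by (rule group_sum) (use finTe in auto)
    moreover have "card {t\<in>Te. snd (snd t) = k} = card (rels_between T e k)" for k
    proof -
      have "{t\<in>Te. snd (snd t) = k} = (\<lambda>r. (e, r, k)) ` rels_between T e k"
        unfolding Te_def trip_subj_def rels_between_def by force
      moreover have "inj_on (\<lambda>r. (e, r, k)) (rels_between T e k)" by (auto simp: inj_on_def)
      ultimately show ?thesis by (simp add: card_image)
    qed
    ultimately show ?thesis by simp
  qed
  have B: "(\<Sum>t\<in>Te. c (fst (snd t)) *\<^sub>R V (fst (snd t)))
      = (\<Sum>r\<in>rels T. real (card (trip_subj_rel T e r)) *\<^sub>R (c r *\<^sub>R V r))"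
  proof -
    have "(\<Sum>t\<in>Te. c (fst (snd t)) *\<^sub>R V (fst (snd t)))
        = (\<Sum>r\<in>rels T. real (card {t\<in>Te. fst (snd t) = r}) *\<^sub>R (c r *\<^sub>R V r))"
    proof (rule group_sum[where f="\<lambda>r. c r *\<^sub>R V r"])
      show "(\<lambda>t. fst (snd t)) ` Te \<subseteq> rels T"
        unfolding Te_def trip_subj_def rels_def by force
    qed (use finTe finR in auto)
    moreover have "{t\<in>Te. fst (snd t) = r} = trip_subj_rel T e r" for r
      unfolding Te_def trip_subj_def trip_subj_rel_def by auto
    ultimately show ?thesis by simp
  qed
  have C: "V r = (\<Sum>k\<in>UNIV. (real (card (trip_subj_rel T k (rinv r))) - real (card (trip_subj_rel T k r))) *\<^sub>R emb k)" for r
  proof -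
    have inv: "\<And>r. rinv (rinv r) = r" and cl: "\<And>s r ob. (s, r, ob) \<in> T \<Longrightarrow> (ob, rinv r, s) \<in> T"
      using rc unfolding reverse_closed_def by auto
    have c1: "card {t\<in>trip_rel T r. fst t = k} = card (trip_subj_rel T k r)" for k
    proof -
      have "{t\<in>trip_rel T r. fst t = k} = trip_subj_rel T k r"
        unfolding trip_rel_def trip_subj_rel_def by auto
      thus ?thesis by simp
    qed
    have c2: "card {t\<in>trip_rel T r. snd (snd t) = k} = card (trip_subj_rel T k (rinv r))" for k
    proof -
      define f :: "'e \<times> 'r \<times> 'e \<Rightarrow> 'e \<times> 'r \<times> 'e" where "f t = (snd (snd t), rinv (fst (snd t)), fst t)" for t
      have "{t\<in>trip_rel T r. snd (snd t) = k} = f ` trip_subj_rel T k (rinv r)"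
      proof
        show "{t \<in> trip_rel T r. snd (snd t) = k} \<subseteq> f ` trip_subj_rel T k (rinv r)"
        proof
          fix t assume "t \<in> {t \<in> trip_rel T r. snd (snd t) = k}"
          then obtain s where t: "t = (s, r, k)" "(s, r, k) \<in> T"
            unfolding trip_rel_def by (cases t) auto
          hence "(k, rinv r, s) \<in> trip_subj_rel T k (rinv r)"
            using cl unfolding trip_subj_rel_def by auto
          moreover have "t = f (k, rinv r, s)" using t inv by (simp add: f_def)
          ultimately show "t \<in> f ` trip_subj_rel T k (rinv r)" by blast
        qed
        show "f ` trip_subj_rel T k (rinv r) \<subseteq> {t \<in> trip_rel T r. snd (snd t) = k}"
        proof
          fix t assume "t \<in> f ` trip_subj_rel T k (rinv r)"
          then obtain ob where "(k, rinv r, ob) \<in> T" "t = f (k, rinv r, ob)"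
            unfolding trip_subj_rel_def by auto
          thus "t \<in> {t \<in> trip_rel T r. snd (snd t) = k}"
            using cl[of k "rinv r" ob] inv unfolding trip_rel_def f_def by simp
        qed
      qed
      moreover have "inj_on f (trip_subj_rel T k (rinv r))"
      proof (rule inj_onI)
        fix a b assume "a \<in> trip_subj_rel T k (rinv r)" "b \<in> trip_subj_rel T k (rinv r)" "f a = f b"
        thus "a = b" unfolding f_def trip_subj_rel_def
          by (cases a, cases b) (auto simp: inv)
      qed
      ultimately show ?thesis by (simp add: card_image)
    qed
    have "V r = (\<Sum>t\<in>trip_rel T r. emb (snd (snd t))) - (\<Sum>t\<in>trip_rel T r. emb (fst t))"
      unfolding V_def by (simp add: sum_subtractf)
    also have "(\<Sum>t\<in>trip_rel T r. emb (snd (snd t))) = (\<Sum>k\<in>UNIV. real (card {t\<in>trip_rel T r. snd (snd t) = k}) *\<^sub>R emb k)"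
      by (rule group_sum) (use finTr in auto)
    also have "(\<Sum>t\<in>trip_rel T r. emb (fst t)) = (\<Sum>k\<in>UNIV. real (card {t\<in>trip_rel T r. fst t = k}) *\<^sub>R emb k)"
      by (rule group_sum) (use finTr in auto)
    finally have "V r = (\<Sum>k\<in>UNIV. real (card (trip_subj_rel T k (rinv r))) *\<^sub>R emb k)
        - (\<Sum>k\<in>UNIV. real (card (trip_subj_rel T k r)) *\<^sub>R emb k)"
      by (simp only: c1 c2)
    thus ?thesis by (simp only: sum_subtractf[symmetric] scaleR_diff_left)
  qed
  have "(\<Sum>k\<in>UNIV. lam T rinv e k *\<^sub>R emb k)
     = (1 / real (card Te)) *\<^sub>R ((\<Sum>k\<in>UNIV. real (card (rels_between T e k)) *\<^sub>R emb k)
        + (\<Sum>k\<in>UNIV. \<Sum>r\<in>rels T. (real (card (trip_subj_rel T e r)) * c r *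
            (real (card (trip_subj_rel T k r)) - real (card (trip_subj_rel T k (rinv r))))) *\<^sub>R emb k))"
    unfolding sum.distrib[symmetric] scaleR_right.sum
  proof (rule sum.cong[OF refl])
    fix k
    define a where "a = (\<Sum>r\<in>rels T. real (card (trip_subj_rel T e r)) * c r *
            (real (card (trip_subj_rel T k r)) - real (card (trip_subj_rel T k (rinv r)))))"
    have "(\<Sum>r\<in>rels T. (real (card (trip_subj_rel T e r)) * c r *
            (real (card (trip_subj_rel T k r)) - real (card (trip_subj_rel T k (rinv r))))) *\<^sub>R emb k)
        = a *\<^sub>R emb k" unfolding a_def by (simp add: scaleR_sum_left)
    moreover have "lam T rinv e k = (1 / real (card Te)) * (real (card (rels_between T e k)) + a)"
      unfolding lam_def a_def Te_def c_def by (simp add: sum_divide_distrib)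
    ultimately show "lam T rinv e k *\<^sub>R emb k = (1 / real (card Te)) *\<^sub>R
       (real (card (rels_between T e k)) *\<^sub>R emb k +
        (\<Sum>r\<in>rels T. (real (card (trip_subj_rel T e r)) * c r *
            (real (card (trip_subj_rel T k r)) - real (card (trip_subj_rel T k (rinv r))))) *\<^sub>R emb k))"
      by (simp only: scaleR_add_left[symmetric] scaleR_scaleR)
  qed
  also have "(\<Sum>k\<in>UNIV. \<Sum>r\<in>rels T. (real (card (trip_subj_rel T e r)) * c r *
            (real (card (trip_subj_rel T k r)) - real (card (trip_subj_rel T k (rinv r))))) *\<^sub>R emb k)
      = (\<Sum>r\<in>rels T. - (real (card (trip_subj_rel T e r)) *\<^sub>R (c r *\<^sub>R V r)))"
    unfolding C
    apply (subst sum.swap)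
    apply (rule sum.cong[OF refl])
    apply (simp add: scaleR_right.sum algebra_simps sum_subtractf sum_negf)
    done
  finally show ?thesis
    using e1 A B by (simp add: sum_negf sum_subtractf)
qed

theorem theorem1:
  fixes TX :: "('a::finite \<times> 'r \<times> 'a) set" and invX :: "'r \<Rightarrow> 'r"
    and TY :: "('b::finite \<times> 's \<times> 'b) set" and invY :: "'s \<Rightarrow> 's"
    and x :: "'a \<Rightarrow> real ^ 'd" and y :: "'b \<Rightarrow> real ^ 'd"
  assumes "finite TX" and "finite TY"
    and "reverse_closed TX invX" and "reverse_closed TY invY"
    and "\<forall>i. trip_subj TX i \<noteq> {}" and "\<forall>j. trip_subj TY j \<noteq> {}"
    and "transE_stationary TX x" and "transE_stationary TY y"
  shows "(\<forall>i. x i = (\<Sum>k\<in>UNIV. lam TX invX i k *\<^sub>R x k))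
       \<and> (\<forall>j. y j = (\<Sum>l\<in>UNIV. lam TY invY j l *\<^sub>R y l))
       \<and> lam_matrix TX invX ** (\<chi> i j. x i \<bullet> y j) ** transpose (lam_matrix TY invY)
           = (\<chi> i j. x i \<bullet> y j)"
proof -
  have X: "\<forall>i. x i = (\<Sum>k\<in>UNIV. lam TX invX i k *\<^sub>R x k)"
    using stat_lin[OF assms(1) assms(3) _ assms(7)] assms(5) by blast
  have Y: "\<forall>j. y j = (\<Sum>l\<in>UNIV. lam TY invY j l *\<^sub>R y l)"
    using stat_lin[OF assms(2) assms(4) _ assms(8)] assms(6) by blast
  have M: "lam_matrix TX invX ** (\<chi> i j. x i \<bullet> y j) ** transpose (lam_matrix TY invY)
           = (\<chi> i j. x i \<bullet> y j)"
  proof (rule vec_eq_iff[THEN iffD2], intro allI, rule vec_eq_iff[THEN iffD2], intro allI)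
    fix i j
    have "(lam_matrix TX invX ** (\<chi> i j. x i \<bullet> y j) ** transpose (lam_matrix TY invY)) $ i $ j
        = (\<Sum>l\<in>UNIV. (\<Sum>k\<in>UNIV. lam TX invX i k * (x k \<bullet> y l)) * lam TY invY j l)"
      by (simp add: matrix_matrix_mult_def transpose_def lam_matrix_def)
    also have "\<dots> = (\<Sum>k\<in>UNIV. lam TX invX i k *\<^sub>R x k) \<bullet> (\<Sum>l\<in>UNIV. lam TY invY j l *\<^sub>R y l)"
      by (simp add: inner_sum_left inner_sum_right sum_distrib_left sum_distrib_right
          algebra_simps)
    also have "\<dots> = x i \<bullet> y j" using X Y by metis
    finally show "(lam_matrix TX invX ** (\<chi> i j. x i \<bullet> y j) ** transpose (lam_matrix TY invY)) $ i $ j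
        = (\<chi> i j. x i \<bullet> y j) $ i $ j" by simp
  qed
  show ?thesis using X Y M by blast
qed

end
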